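(* Let $G\subset\mathbb R^r$ be a lattice of rank $r$ acting on $C(\mathbb R^r)$ by $f^g(x)=f(x+g)$. (a) For every $n\in\mathbb Z_+$ and every $G$-periodic monomial $Q_m$ of degree $m\le n$, $D^{n+1}Q_m=0$. (b) Let $n\ge1$ and $Q_n=x_{i_1}\cdots x_{i_n}=x_1^{j_1}\cdots x_r^{j_r}$ with $1\le i_1,\dots,i_n\le r$, $j_1+\dots+j_r=n$, each $x_k$ appearing exactly $j_k$ times. For $g_1,\dots,g_n\in G$ write $g_i=\sum_{k=1}^rg_{i,k}\mathbf e_k$ in the standard basis $\mathbf e_1,\dots,\mathbf e_r$ of $\mathbb R^r$. Then $[D^nQ_n](g_1,\dots,g_n)$ is the constant function $$\sum_{(s_1,\dots,s_n)\in\mathbf S(n)}g_{1,i_{s_1}}g_{2,i_{s_2}}\cdots g_{n,i_{s_n}}=j_1!\cdots j_r!\sum_{\boldsymbol\kappa}g_{1,k_1}g_{2,k_2}\cdots g_{n,k_n},$$ where $\mathbf S(n)$ is the set of permutations of $\{1,\dots,n\}$ and $\boldsymbol\kappa=(k_1,\dots,k_n)$ runs over all sequences of length $n$ containing each index $k\in\{1,\dots,r\}$ exactly $j_k$ times.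
   Context: $C(\mathbb R^r)$ is the algebra of continuous (real or complex) functions on $\mathbb R^r$, and $x_1,\dots,x_r$ are the standard coordinates. A function is $G$-periodic if $f(x+g)=f(x)$ for all $g\in G$. A $G$-periodic monomial of degree $m$ is a function $f(x)\,x_{i_1}\cdots x_{i_m}$ with $f\ne0$ continuous and $G$-periodic. For a group $G$ acting on a space $A$ by $f\mapsto f^g$: $\mathcal C^0(G,A)=A$; for $n\ge1$, $\mathcal C^n(G,A)$ is the space of functions $G^n\to A$ vanishing whenever some argument is $0\in G$; $(d_nc)(g_1,\dots,g_n)=[c(g_1,\dots,g_{n-1})]^{g_n}-c(g_1,\dots,g_{n-1})$; $D^0=\mathrm{id}$, $D^n=d_nD^{n-1}$. *)

theory Defs
  imports "HOL-Analysis.Analysis" "HOL-Combinatorics.Permutations"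
begin

definition full_rank_lattice :: "(real ^ 'n) set \<Rightarrow> bool" where
  "full_rank_lattice G \<longleftrightarrow>
     (\<exists>b :: 'n \<Rightarrow> real ^ 'n. inj b \<and> independent (range b) \<and>
        G = {(\<Sum>k\<in>UNIV. of_int (c k) *\<^sub>R b k) | c :: 'n \<Rightarrow> int. True})"

definition G_periodic :: "(real ^ 'n) set \<Rightarrow> (real ^ 'n \<Rightarrow> 'a) \<Rightarrow> bool" where
  "G_periodic G f \<longleftrightarrow> (\<forall>g\<in>G. \<forall>x. f (x + g) = f x)"

text \<open>The iterated coboundary D^n = d_n \<circ> ... \<circ> d_1 applied to an element Q of the
  space of functions, for the action f^g(x) = f(x+g).  The cochain D^n Q is evaluated at
  (g 1, ..., g n); it only depends on these values.\<close>
fun Dcob :: "nat \<Rightarrow> (real ^ 'n \<Rightarrow> 'a::ab_group_add) \<Rightarrow> (nat \<Rightarrow> real ^ 'n) \<Rightarrow> (real ^ 'n \<Rightarrow> 'a)" where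
  "Dcob 0 Q g = Q"
| "Dcob (Suc n) Q g = (\<lambda>x. Dcob n Q g (x + g (Suc n)) - Dcob n Q g x)"

end

theory Submission
  imports Defs
begin


definition dif :: "real ^ 'n \<Rightarrow> (real ^ 'n \<Rightarrow> 'a::ab_group_add) \<Rightarrow> real ^ 'n \<Rightarrow> 'a" where
  "dif h Q = (\<lambda>x. Q (x + h) - Q x)"

lemma Dcob_Suc_dif: "Dcob (Suc n) Q g = dif (g (Suc n)) (Dcob n Q g)"
  by (simp add: dif_def)

inductive dle :: "nat \<Rightarrow> (real ^ 'n \<Rightarrow> 'a::real_normed_field) \<Rightarrow> bool" where
  dconst: "dle 0 (\<lambda>x. c)"
| dmono: "dle m Q \<Longrightarrow> dle (Suc m) Q"
| dadd: "dle m Q1 \<Longrightarrow> dle m Q2 \<Longrightarrow> dle m (\<lambda>x. Q1 x + Q2 x)"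
| dsmul: "dle m Q \<Longrightarrow> dle m (\<lambda>x. c * Q x)"
| dcoord: "dle m Q \<Longrightarrow> dle (Suc m) (\<lambda>x::real ^ 'n. (of_real (x $ k) :: 'a) * Q x)"

lemma dle_zero: "dle m (\<lambda>x. 0)"
proof (induction m)
  case 0 show ?case using dconst by blast
next
  case (Suc m) then show ?case by (rule dmono)
qed

lemma dle_le: "dle m Q \<Longrightarrow> m \<le> k \<Longrightarrow> dle k Q"
proof (induction k)
  case 0 then show ?case by simp
next
  case (Suc k) then show ?case by (metis dmono le_Suc_eq)
qed

lemma dif_dle: fixes Q :: "real ^ 'n \<Rightarrow> 'a::real_normed_field"
  shows "dle m Q \<Longrightarrow> dle (m - 1) (dif h Q) \<and> (m = 0 \<longrightarrow> dif h Q = (\<lambda>x. 0))"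
proof (induction rule: dle.induct)
  case (dconst c) then show ?case by (simp add: dif_def dle_zero)
next
  case (dmono m Q)
  show ?case
  proof (cases "m = 0")
    case True then show ?thesis using dmono by (simp add: dle_zero)
  next
    case False then show ?thesis using dmono dle_le[of "m - 1" "dif h Q" m] by simp
  qed
next
  case (dadd m Q1 Q2)
  have e: "dif h (\<lambda>x. Q1 x + Q2 x) = (\<lambda>x. dif h Q1 x + dif h Q2 x)"
    by (simp add: dif_def fun_eq_iff algebra_simps)
  show ?case using dadd by (auto simp: e intro: dle.dadd)
next
  case (dsmul m Q c)
  have e: "dif h (\<lambda>x. c * Q x) = (\<lambda>x. c * dif h Q x)"
    by (simp add: dif_def fun_eq_iff algebra_simps)
  show ?case using dsmul by (auto simp: e intro: dle.dsmul)
next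
  case (dcoord m Q k)
  let ?L = "\<lambda>x. of_real (x $ k) :: 'a"
  have e: "dif h (\<lambda>x. ?L x * Q x) = (\<lambda>x. (?L x * dif h Q x + ?L h * dif h Q x) + ?L h * Q x)"
    by (simp add: dif_def fun_eq_iff algebra_simps)
  show ?case
  proof (cases m)
    case 0
    then have "dif h Q = (\<lambda>x. 0)" using dcoord by simp
    then have "dif h (\<lambda>x. ?L x * Q x) = (\<lambda>x. ?L h * Q x)" by (simp add: e)
    then show ?thesis using dcoord 0 by (simp add: dle.dsmul)
  next
    case (Suc m')
    then have d: "dle m' (dif h Q)" using dcoord by simp
    have 1: "dle (Suc m') (\<lambda>x. ?L x * dif h Q x)" by (rule dle.dcoord[OF d])
    have 2: "dle (Suc m') (\<lambda>x. ?L h * dif h Q x)" by (rule dle.dsmul[OF dle.dmono[OF d]])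
    have 3: "dle (Suc m') (\<lambda>x. ?L h * Q x)" using dle.dsmul[OF dcoord(1)] Suc by simp
    have "dle (Suc m') (dif h (\<lambda>x. ?L x * Q x))" unfolding e by (rule dle.dadd[OF dle.dadd[OF 1 2] 3])
    then show ?thesis using Suc by simp
  qed
qed

lemma Dcob_dle: "dle m Q \<Longrightarrow> dle (m - n) (Dcob n Q g) \<and> (n > m \<longrightarrow> Dcob n Q g = (\<lambda>x. 0))"
proof (induction n)
  case 0 then show ?case by simp
next
  case (Suc n)
  then have IH: "dle (m - n) (Dcob n Q g)" "n > m \<longrightarrow> Dcob n Q g = (\<lambda>x. 0)" by auto
  have D: "dle (m - n - 1) (dif (g (Suc n)) (Dcob n Q g)) \<and> (m - n = 0 \<longrightarrow> dif (g (Suc n)) (Dcob n Q g) = (\<lambda>x. 0))"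
    by (rule dif_dle[OF IH(1)])
  have m: "m - n - 1 = m - Suc n" by simp
  show ?case
  proof
    show "dle (m - Suc n) (Dcob (Suc n) Q g)" using D unfolding m Dcob_Suc_dif by blast
    show "Suc n > m \<longrightarrow> Dcob (Suc n) Q g = (\<lambda>x. 0)"
    proof
      assume "Suc n > m"
      then have "n > m \<or> m - n = 0" by auto
      then show "Dcob (Suc n) Q g = (\<lambda>x. 0)"
      proof
        assume "n > m" then show ?thesis using IH(2) by simp
      next
        assume "m - n = 0"
        then have "dif (g (Suc n)) (Dcob n Q g) = (\<lambda>x. 0)" using D by blast
        then show ?thesis by (simp only: Dcob_Suc_dif)
      qed
    qed
  qed
qed

lemma Dcob_dif: "Dcob n (dif h Q) g = dif h (Dcob n Q g)"
proof (induction n)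
  case 0 then show ?case by simp
next
  case (Suc n)
  have c: "\<And>x. x + g (Suc n) + h = x + h + g (Suc n)" by (simp add: algebra_simps)
  show ?case
  proof (rule ext)
    fix x
    have "Dcob (Suc n) (dif h Q) g x = Dcob n (dif h Q) g (x + g (Suc n)) - Dcob n (dif h Q) g x" by simp
    also have "\<dots> = dif h (Dcob n Q g) (x + g (Suc n)) - dif h (Dcob n Q g) x" by (simp only: Suc)
    also have "\<dots> = dif h (Dcob (Suc n) Q g) x" unfolding dif_def Dcob.simps c by simp
    finally show "Dcob (Suc n) (dif h Q) g x = dif h (Dcob (Suc n) Q g) x" .
  qed
qed

lemma Dcob_Suc': "Dcob (Suc n) Q g = Dcob n (dif (g (Suc n)) Q) g"
  by (simp only: Dcob_Suc_dif Dcob_dif)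

lemma Dcob_lin: fixes Q :: "'b \<Rightarrow> real ^ 'n \<Rightarrow> 'a::real_normed_field"
  shows "Dcob n (\<lambda>x. (\<Sum>a\<in>A. c a * Q a x) + R x) g = (\<lambda>x. (\<Sum>a\<in>A. c a * Dcob n (Q a) g x) + Dcob n R g x)"
proof (induction n)
  case 0 then show ?case by simp
next
  case (Suc n)
  show ?case by (simp add: Suc fun_eq_iff right_diff_distrib sum_subtractf)
qed

lemma Dcob_periodic:
  fixes f :: "real ^ 'n \<Rightarrow> 'a::real_normed_field"
  assumes "G_periodic G f" "\<forall>l\<in>{1..n}. g l \<in> G"
  shows "Dcob n (\<lambda>x. f x * Q x) g = (\<lambda>x. f x * Dcob n Q g x)"
  using assms(2)
proof (induction n)
  case 0 then show ?case by simp
next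
  case (Suc n)
  then have "g (Suc n) \<in> G" by simp
  then have "\<And>x. f (x + g (Suc n)) = f x" using assms(1) by (simp add: G_periodic_def)
  with Suc show ?case by (simp add: fun_eq_iff right_diff_distrib)
qed

lemma dle_prod: "finite A \<Longrightarrow> dle (card A) (\<lambda>x. \<Prod>a\<in>A. (of_real (x $ i a) :: 'a::real_normed_field))"
proof (induction rule: finite_induct)
  case empty then show ?case using dconst[of 1] by simp
next
  case (insert b B) then show ?case by (simp add: dle.dcoord)
qed




definition Wg :: "nat set \<Rightarrow> nat set \<Rightarrow> (nat \<Rightarrow> nat \<Rightarrow> bool) \<Rightarrow> (nat \<Rightarrow> nat) set" where
  "Wg B A P = {\<sigma>. bij_betw \<sigma> B A \<and> (\<forall>x. x \<notin> B \<longrightarrow> \<sigma> x = x) \<and> (\<forall>b\<in>B. P b (\<sigma> b))}"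

lemma bij_upd: "bij_betw f B A \<Longrightarrow> x \<notin> B \<Longrightarrow> y \<notin> A \<Longrightarrow> bij_betw (f(x:=y)) (insert x B) (insert y A)"
  unfolding bij_betw_def inj_on_def by (auto simp: image_iff)

lemma bij_rem: "bij_betw f (insert x B) A \<Longrightarrow> x \<notin> B \<Longrightarrow> bij_betw (f(x:=z)) B (A - {f x})"
  unfolding bij_betw_def inj_on_def by (auto simp: image_iff)

lemma finite_Wg: assumes "finite B" "finite A" shows "finite (Wg B A P)"
proof -
  have "Wg B A P \<subseteq> (\<lambda>f x. if x \<in> B then f x else x) ` (B \<rightarrow>\<^sub>E A)"
  proof
    fix \<sigma> assume s: "\<sigma> \<in> Wg B A P"
    then have "restrict \<sigma> B \<in> B \<rightarrow>\<^sub>E A" unfolding Wg_def bij_betw_def by auto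
    moreover have "\<sigma> = (\<lambda>x. if x \<in> B then restrict \<sigma> B x else x)"
      using s unfolding Wg_def by (auto simp: fun_eq_iff)
    ultimately show "\<sigma> \<in> (\<lambda>f x. if x \<in> B then f x else x) ` (B \<rightarrow>\<^sub>E A)" by blast
  qed
  then show ?thesis using finite_PiE[OF assms(1), of "\<lambda>_. A"] assms(2)
    by (meson finite_imageI finite_subset)
qed

lemma Wg_split:
  fixes \<Phi> :: "(nat \<Rightarrow> nat) \<Rightarrow> 'b::comm_monoid_add"
  assumes fA: "finite A" and fB: "finite B" and bB: "b \<notin> B"
  shows "(\<Sum>\<tau>\<in>Wg (insert b B) A P. \<Phi> \<tau>) = (\<Sum>a\<in>{a\<in>A. P b a}. \<Sum>\<sigma>\<in>Wg B (A - {a}) P. \<Phi> (\<sigma>(b := a)))"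
proof -
  have "(\<Sum>a\<in>{a\<in>A. P b a}. \<Sum>\<sigma>\<in>Wg B (A - {a}) P. \<Phi> (\<sigma>(b := a)))
      = (\<Sum>(a,\<sigma>)\<in>Sigma {a\<in>A. P b a} (\<lambda>a. Wg B (A - {a}) P). \<Phi> (\<sigma>(b := a)))"
    using fA fB by (subst sum.Sigma) (auto intro: finite_Wg)
  also have "\<dots> = (\<Sum>\<tau>\<in>Wg (insert b B) A P. \<Phi> \<tau>)"
  proof (rule sum.reindex_bij_witness[symmetric, of _ "\<lambda>(a,\<sigma>). \<sigma>(b := a)" "\<lambda>\<tau>. (\<tau> b, \<tau>(b := b))"])
    fix \<tau> assume "\<tau> \<in> Wg (insert b B) A P"
    then have t: "bij_betw \<tau> (insert b B) A" "\<forall>x. x \<notin> insert b B \<longrightarrow> \<tau> x = x" "\<forall>c\<in>insert b B. P c (\<tau> c)"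
      unfolding Wg_def by auto
    show "(case (\<tau> b, \<tau>(b := b)) of (a, \<sigma>) \<Rightarrow> \<sigma>(b := a)) = \<tau>" by simp
    show "(case (\<tau> b, \<tau>(b := b)) of (a, \<sigma>) \<Rightarrow> \<Phi> (\<sigma>(b := a))) = \<Phi> \<tau>" by simp
    have "\<tau> b \<in> A" using t(1) by (auto simp: bij_betw_def)
    moreover have "\<tau>(b := b) \<in> Wg B (A - {\<tau> b}) P"
      unfolding Wg_def using bij_rem[OF t(1) bB] t(2,3) bB by auto
    ultimately show "(\<tau> b, \<tau>(b := b)) \<in> Sigma {a\<in>A. P b a} (\<lambda>a. Wg B (A - {a}) P)"
      using t(3) by auto
  next
    fix p assume "p \<in> Sigma {a\<in>A. P b a} (\<lambda>a. Wg B (A - {a}) P)"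
    then obtain a \<sigma> where p: "p = (a, \<sigma>)" and a: "a \<in> A" "P b a" and s: "\<sigma> \<in> Wg B (A - {a}) P" by auto
    from s have s1: "bij_betw \<sigma> B (A - {a})" "\<forall>x. x \<notin> B \<longrightarrow> \<sigma> x = x" "\<forall>c\<in>B. P c (\<sigma> c)"
      unfolding Wg_def by auto
    have sb: "\<sigma> b = b" using s1(2) bB by simp
    show "(\<lambda>\<tau>. (\<tau> b, \<tau>(b := b))) (case p of (a, \<sigma>) \<Rightarrow> \<sigma>(b := a)) = p"
      using sb p by (simp add: fun_upd_idem)
    have "bij_betw (\<sigma>(b := a)) (insert b B) (insert a (A - {a}))"
      by (rule bij_upd[OF s1(1) bB]) simp
    moreover have "insert a (A - {a}) = A" using a by auto
    ultimately show "(case p of (a, \<sigma>) \<Rightarrow> \<sigma>(b := a)) \<in> Wg (insert b B) A P"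
      unfolding Wg_def p using s1(2,3) a bB by auto
  qed
  finally show ?thesis by simp
qed




lemma R_lemma:
  fixes i :: "nat \<Rightarrow> 'n::finite" and h :: "real ^ 'n"
  assumes "finite A"
  shows "dle (card A - 2) (\<lambda>x. dif h (\<lambda>y. \<Prod>a\<in>A. (of_real (y $ i a) :: 'a::real_normed_field)) x
             - (\<Sum>a\<in>A. of_real (h $ i a) * (\<Prod>c\<in>A - {a}. of_real (x $ i c))))
       \<and> (card A \<le> 1 \<longrightarrow> (\<lambda>x. dif h (\<lambda>y. \<Prod>a\<in>A. (of_real (y $ i a) :: 'a)) x
             - (\<Sum>a\<in>A. of_real (h $ i a) * (\<Prod>c\<in>A - {a}. of_real (x $ i c)))) = (\<lambda>x. 0))"
  using assms
proof (induction rule: finite_induct)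
  case empty
  then show ?case by (simp add: dif_def dle_zero)
next
  case (insert b B)
  define L where "L = (\<lambda>x a. (of_real (x $ i a) :: 'a))"
  define P where "P = (\<lambda>C x. \<Prod>a\<in>C. L x a)"
  define R where "R = (\<lambda>C x. dif h (P C) x - (\<Sum>a\<in>C. L h a * P (C - {a}) x))"
  have IH: "dle (card B - 2) (R B)" "card B \<le> 1 \<longrightarrow> R B = (\<lambda>x. 0)"
    using insert.IH unfolding R_def P_def L_def by auto
  have key: "R (insert b B) = (\<lambda>x. L x b * R B x + L h b * dif h (P B) x)"
  proof
    fix x
    have P1: "\<And>y. P (insert b B) y = L y b * P B y" unfolding P_def using insert by simp
    have S1: "(\<Sum>a\<in>insert b B. L h a * P (insert b B - {a}) x)
        = L h b * P B x + (\<Sum>a\<in>B. L h a * P (insert b B - {a}) x)"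
      using insert by (simp add: insert_Diff_if)
    have S2: "(\<Sum>a\<in>B. L h a * P (insert b B - {a}) x) = L x b * (\<Sum>a\<in>B. L h a * P (B - {a}) x)"
    proof -
      have "\<And>a. a \<in> B \<Longrightarrow> P (insert b B - {a}) x = L x b * P (B - {a}) x"
      proof -
        fix a assume "a \<in> B"
        then have "insert b B - {a} = insert b (B - {a})" using insert by auto
        then show "P (insert b B - {a}) x = L x b * P (B - {a}) x"
          unfolding P_def using insert by simp
      qed
      then show ?thesis by (simp add: sum_distrib_left algebra_simps)
    qed
    have Lh: "L (x + h) b = L x b + L h b" unfolding L_def by simp
    show "R (insert b B) x = L x b * R B x + L h b * dif h (P B) x"
      unfolding R_def dif_def S1 S2 P1 Lh by (simp add: algebra_simps)
  qed
  have dP: "dle (card B - 1) (dif h (P B))"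
    using dif_dle[OF dle_prod[OF insert.hyps(1), of i]] unfolding P_def L_def by blast
  have part1: "dle (card B - 1) (\<lambda>x. L x b * R B x)"
  proof (cases "card B \<le> 1")
    case True
    then have "(\<lambda>x. L x b * R B x) = (\<lambda>x. 0)" using IH(2) by simp
    then show ?thesis by (simp add: dle_zero)
  next
    case False
    then have "card B - 1 = Suc (card B - 2)" by simp
    then show ?thesis using dle.dcoord[OF IH(1), of "i b"] unfolding L_def by simp
  qed
  have "dle (card B - 1) (R (insert b B))"
    unfolding key by (rule dle.dadd[OF part1 dle.dsmul[OF dP]])
  moreover have "card (insert b B) - 2 = card B - 1" using insert by simp
  moreover have "card (insert b B) \<le> 1 \<longrightarrow> R (insert b B) = (\<lambda>x. 0)"
  proof
    assume "card (insert b B) \<le> 1"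
    then have "B = {}" using insert by (simp add: card_insert_if)
    then show "R (insert b B) = (\<lambda>x. 0)" unfolding R_def P_def L_def dif_def by simp
  qed
  ultimately show ?case unfolding R_def P_def L_def by simp
qed




lemma Dcob_zero: "Dcob n (\<lambda>x. 0 :: 'a::ab_group_add) g = (\<lambda>x. 0)"
  by (induction n) simp_all

lemma Wg_empty: "Wg {} {} P = {id}"
  unfolding Wg_def by (auto simp: fun_eq_iff)

lemma main_b1:
  fixes i :: "nat \<Rightarrow> 'n::finite" and g :: "nat \<Rightarrow> real ^ 'n"
  shows "finite A \<Longrightarrow> card A = n \<Longrightarrow>
    Dcob n (\<lambda>x. \<Prod>a\<in>A. (of_real (x $ i a) :: 'a::real_normed_field)) g
      = (\<lambda>x. \<Sum>\<sigma>\<in>Wg {1..n} A (\<lambda>_ _. True). \<Prod>l=1..n. of_real (g l $ i (\<sigma> l)))"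
proof (induction n arbitrary: A)
  case 0
  then have "A = {}" by simp
  then show ?case by (simp add: Wg_empty)
next
  case (Suc n)
  define L where "L = (\<lambda>x a. (of_real (x $ i a) :: 'a))"
  define P where "P = (\<lambda>C x. \<Prod>a\<in>C. L x a)"
  define R where "R = (\<lambda>x. dif (g (Suc n)) (P A) x - (\<Sum>a\<in>A. L (g (Suc n)) a * P (A - {a}) x))"
  have RL: "dle (card A - 2) R \<and> (card A \<le> 1 \<longrightarrow> R = (\<lambda>x. 0))"
    using R_lemma[OF Suc.prems(1), of "g (Suc n)" i] unfolding R_def P_def L_def by simp
  have R0: "Dcob n R g = (\<lambda>x. 0)"
  proof (cases n)
    case 0 then show ?thesis using RL Suc.prems by simp
  next
    case (Suc n')
    then have "n > card A - 2" using \<open>card A = Suc n\<close> by simp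
    then show ?thesis using Dcob_dle[of "card A - 2" R n g] RL by blast
  qed
  have dP: "dif (g (Suc n)) (P A) = (\<lambda>x. (\<Sum>a\<in>A. L (g (Suc n)) a * P (A - {a}) x) + R x)"
    unfolding R_def by simp
  have IH: "\<And>a. a \<in> A \<Longrightarrow> Dcob n (P (A - {a})) g = (\<lambda>x. \<Sum>\<sigma>\<in>Wg {1..n} (A - {a}) (\<lambda>_ _. True). \<Prod>l=1..n. L (g l) (\<sigma> l))"
    unfolding P_def L_def using Suc by simp
  have "Dcob (Suc n) (P A) g = Dcob n (dif (g (Suc n)) (P A)) g" by (rule Dcob_Suc')
  also have "\<dots> = (\<lambda>x. (\<Sum>a\<in>A. L (g (Suc n)) a * Dcob n (P (A - {a})) g x) + Dcob n R g x)"
    unfolding dP by (rule Dcob_lin)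
  also have "\<dots> = (\<lambda>x. \<Sum>a\<in>A. L (g (Suc n)) a * (\<Sum>\<sigma>\<in>Wg {1..n} (A - {a}) (\<lambda>_ _. True). \<Prod>l=1..n. L (g l) (\<sigma> l)))"
    using IH R0 by simp
  also have "\<dots> = (\<lambda>x. \<Sum>\<tau>\<in>Wg {1..Suc n} A (\<lambda>_ _. True). \<Prod>l=1..Suc n. L (g l) (\<tau> l))"
  proof -
    have ins: "{1..Suc n} = insert (Suc n) {1..n}" by auto
    have "(\<Sum>\<tau>\<in>Wg {1..Suc n} A (\<lambda>_ _. True). \<Prod>l=1..Suc n. L (g l) (\<tau> l))
        = (\<Sum>a\<in>{a\<in>A. True}. \<Sum>\<sigma>\<in>Wg {1..n} (A - {a}) (\<lambda>_ _. True). \<Prod>l=1..Suc n. L (g l) ((\<sigma>(Suc n := a)) l))"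
      unfolding ins by (rule Wg_split[OF Suc.prems(1)]) auto
    also have "\<dots> = (\<Sum>a\<in>A. L (g (Suc n)) a * (\<Sum>\<sigma>\<in>Wg {1..n} (A - {a}) (\<lambda>_ _. True). \<Prod>l=1..n. L (g l) (\<sigma> l)))"
    proof -
      have "\<And>a \<sigma>. (\<Prod>l=1..Suc n. L (g l) ((\<sigma>(Suc n := a)) l)) = L (g (Suc n)) a * (\<Prod>l=1..n. L (g l) (\<sigma> l))"
        by (simp add: prod.nat_ivl_Suc')
      then show ?thesis by (simp add: sum_distrib_left mult_ac)
    qed
    finally show ?thesis by simp
  qed
  finally show ?case unfolding P_def L_def .
qed

lemma count_lemma:
  fixes i \<kappa> :: "nat \<Rightarrow> 'k::finite"
  assumes "finite B"
  shows "\<forall>A. finite A \<and> (\<forall>k. card {b\<in>B. \<kappa> b = k} = card {a\<in>A. i a = k}) \<longrightarrow>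
     card (Wg B A (\<lambda>b a. i a = \<kappa> b)) = (\<Prod>k\<in>UNIV. fact (card {a\<in>A. i a = k}))"
  using assms
proof (induction rule: finite_induct)
  case empty
  show ?case
  proof (intro allI impI)
    fix A :: "nat set" assume a: "finite A \<and> (\<forall>k. card {b\<in>{}. \<kappa> b = k} = card {a\<in>A. i a = k})"
    have "A = {}"
    proof (rule ccontr)
      assume "A \<noteq> {}"
      then obtain a where "a \<in> A" by auto
      note aA = this
      have "card {a'\<in>A. i a' = i a} = 0" using a by simp
      then have "{a'\<in>A. i a' = i a} = {}" using a by simp
      then show False using aA by blast
    qed
    then show "card (Wg {} A (\<lambda>b a. i a = \<kappa> b)) = (\<Prod>k\<in>UNIV. fact (card {a\<in>A. i a = k}))"
      by (simp add: Wg_empty)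
  qed
next
  case (insert b B)
  show ?case
  proof (intro allI impI)
    fix A :: "nat set" assume a: "finite A \<and> (\<forall>k. card {b'\<in>insert b B. \<kappa> b' = k} = card {a\<in>A. i a = k})"
    define k0 where "k0 = \<kappa> b"
    define F where "F = {a\<in>A. i a = k0}"
    define c' where "c' = (\<lambda>k. if k = k0 then card F - 1 else card {a\<in>A. i a = k})"
    have fA: "finite A" using a by simp
    have cardB: "\<And>k. card {b'\<in>insert b B. \<kappa> b' = k} = (if k = k0 then Suc (card {b'\<in>B. \<kappa> b' = k}) else card {b'\<in>B. \<kappa> b' = k})"
    proof -
      fix k
      show "card {b'\<in>insert b B. \<kappa> b' = k} = (if k = k0 then Suc (card {b'\<in>B. \<kappa> b' = k}) else card {b'\<in>B. \<kappa> b' = k})"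
      proof (cases "k = k0")
        case True
        then have "{b'\<in>insert b B. \<kappa> b' = k} = insert b {b'\<in>B. \<kappa> b' = k}" unfolding k0_def by auto
        then show ?thesis using True insert by simp
      next
        case False
        then have "{b'\<in>insert b B. \<kappa> b' = k} = {b'\<in>B. \<kappa> b' = k}" unfolding k0_def by auto
        then show ?thesis using False by simp
      qed
    qed
    have cF: "card F = Suc (card {b'\<in>B. \<kappa> b' = k0})"
      using a cardB[of k0] unfolding F_def by simp
    have fib: "\<And>a k. a \<in> F \<Longrightarrow> card {a'\<in>A - {a}. i a' = k} = c' k"
    proof -
      fix a k assume aF: "a \<in> F"
      have "{a'\<in>A - {a}. i a' = k} = {a'\<in>A. i a' = k} - {a}" by auto
      then show "card {a'\<in>A - {a}. i a' = k} = c' k"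
        using aF fA unfolding c'_def F_def by (auto simp: card_Diff_singleton_if)
    qed
    have condB: "\<And>k. card {b'\<in>B. \<kappa> b' = k} = c' k"
      using a cardB cF unfolding c'_def by (metis diff_Suc_1)
    have rec: "\<And>a. a \<in> F \<Longrightarrow> card (Wg B (A - {a}) (\<lambda>b a. i a = \<kappa> b)) = (\<Prod>k\<in>UNIV. fact (c' k))"
    proof -
      fix a assume aF: "a \<in> F"
      have "card (Wg B (A - {a}) (\<lambda>b a. i a = \<kappa> b)) = (\<Prod>k\<in>UNIV. fact (card {a'\<in>A - {a}. i a' = k}))"
        using insert.IH fA condB fib[OF aF] by simp
      then show "card (Wg B (A - {a}) (\<lambda>b a. i a = \<kappa> b)) = (\<Prod>k\<in>UNIV. fact (c' k))"
        using fib[OF aF] by simp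
    qed
    have "card (Wg (insert b B) A (\<lambda>b a. i a = \<kappa> b)) = (\<Sum>\<tau>\<in>Wg (insert b B) A (\<lambda>b a. i a = \<kappa> b). 1)"
      by simp
    also have "\<dots> = (\<Sum>a\<in>{a\<in>A. i a = \<kappa> b}. \<Sum>\<sigma>\<in>Wg B (A - {a}) (\<lambda>b a. i a = \<kappa> b). 1)"
      by (rule Wg_split[OF fA insert.hyps(1,2)])
    also have "\<dots> = (\<Sum>a\<in>F. (\<Prod>k\<in>UNIV. fact (c' k)))"
      unfolding F_def k0_def using rec unfolding F_def k0_def by simp
    also have "\<dots> = card F * (\<Prod>k\<in>UNIV. fact (c' k))" by simp
    also have "\<dots> = (\<Prod>k\<in>UNIV. fact (card {a\<in>A. i a = k}))"
    proof -
      have "(\<Prod>k\<in>UNIV. fact (c' k)) = fact (c' k0) * (\<Prod>k\<in>UNIV - {k0}. fact (c' k))"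
        by (simp add: prod.remove)
      also have "(\<Prod>k\<in>UNIV - {k0}. fact (c' k)) = (\<Prod>k\<in>UNIV - {k0}. fact (card {a\<in>A. i a = k}))"
        unfolding c'_def by (rule prod.cong) auto
      finally have 1: "(\<Prod>k\<in>UNIV. fact (c' k)) = fact (card F - 1) * (\<Prod>k\<in>UNIV - {k0}. fact (card {a\<in>A. i a = k}))"
        unfolding c'_def by simp
      have 2: "(\<Prod>k\<in>UNIV. fact (card {a\<in>A. i a = k})) = fact (card F) * (\<Prod>k\<in>UNIV - {k0}. fact (card {a\<in>A. i a = k}))"
        unfolding F_def by (simp add: prod.remove)
      have 3: "fact (card F) = card F * fact (card F - 1)" using cF by simp
      show ?thesis unfolding 1 2 3 by simp
    qed
    finally show "card (Wg (insert b B) A (\<lambda>b a. i a = \<kappa> b)) = (\<Prod>k\<in>UNIV. fact (card {a\<in>A. i a = k}))" .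
  qed
qed




lemma perm_iff: "\<sigma> permutes S \<longleftrightarrow> bij_betw \<sigma> S S \<and> (\<forall>x. x \<notin> S \<longrightarrow> \<sigma> x = x)"
  using permutes_imp_bij permutes_not_in bij_imp_permutes by metis

lemma Wg_perm: "Wg {1..n} {1..n} (\<lambda>_ _. True) = {\<sigma>. \<sigma> permutes {1..n}}"
  unfolding Wg_def using permutes_imp_bij permutes_not_in bij_imp_permutes by fastforce

lemma part_b2:
  fixes i :: "nat \<Rightarrow> 'n::finite" and g :: "nat \<Rightarrow> real ^ 'n"
  shows "(\<Sum>\<sigma>\<in>{\<sigma>. \<sigma> permutes {1..n}}. \<Prod>l=1..n. of_real (g l $ i (\<sigma> l)) :: 'a::real_normed_field)
          = of_nat (\<Prod>k\<in>UNIV. fact (card {l\<in>{1..n}. i l = k}))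
            * (\<Sum>\<kappa>\<in>{\<kappa> \<in> {1..n} \<rightarrow>\<^sub>E (UNIV :: 'n set).
                     \<forall>k. card {l\<in>{1..n}. \<kappa> l = k} = card {l\<in>{1..n}. i l = k}}.
                 \<Prod>l=1..n. of_real (g l $ \<kappa> l))"
proof -
  define S where "S = {\<sigma>. \<sigma> permutes {1..n}}"
  define T where "T = {\<kappa> \<in> {1..n} \<rightarrow>\<^sub>E (UNIV :: 'n set). \<forall>k. card {l\<in>{1..n}. \<kappa> l = k} = card {l\<in>{1..n}. i l = k}}"
  define hh where "hh = (\<lambda>\<sigma>::nat\<Rightarrow>nat. \<lambda>l\<in>{1..n}. i (\<sigma> l))"
  define Y where "Y = (\<lambda>\<sigma>. \<Prod>l=1..n. (of_real (g l $ i (\<sigma> l)) :: 'a))"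
  define Z where "Z = (\<lambda>\<kappa>. \<Prod>l=1..n. (of_real (g l $ \<kappa> l) :: 'a))"
  define N where "N = (\<Prod>k\<in>UNIV. fact (card {l\<in>{1..n}. i l = k}) :: nat)"
  have fS: "finite S" unfolding S_def by (rule finite_permutations) simp
  have fT: "finite T" unfolding T_def
    by (rule finite_subset[OF _ finite_PiE[of "{1..n}" "\<lambda>_. UNIV :: 'n set"]]) auto
  have img: "hh ` S \<subseteq> T"
  proof
    fix \<kappa> assume "\<kappa> \<in> hh ` S"
    then obtain \<sigma> where s: "\<sigma> permutes {1..n}" and k: "\<kappa> = hh \<sigma>" unfolding S_def by auto
    have "\<kappa> \<in> {1..n} \<rightarrow>\<^sub>E (UNIV :: 'n set)" unfolding k hh_def by simp
    moreover have "card {l\<in>{1..n}. \<kappa> l = k} = card {l\<in>{1..n}. i l = k}" for k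
    proof -
      have "card {l\<in>{1..n}. \<kappa> l = k} = card {l\<in>{1..n}. i (\<sigma> l) = k}"
        unfolding k hh_def by (rule arg_cong[where f=card]) auto
      also have "\<dots> = card (\<sigma> ` {l\<in>{1..n}. i (\<sigma> l) = k})"
        by (rule card_image[symmetric]) (rule permutes_inj_on[OF s])
      also have "\<dots> = card {y\<in>\<sigma> ` {1..n}. i y = k}" by (rule arg_cong[where f=card]) auto
      also have "\<dots> = card {l\<in>{1..n}. i l = k}" using permutes_image[OF s] by simp
      finally show ?thesis .
    qed
    ultimately show "\<kappa> \<in> T" unfolding T_def by auto
  qed
  have inner: "sum Y {\<sigma>\<in>S. hh \<sigma> = \<kappa>} = of_nat N * Z \<kappa>" if kT: "\<kappa> \<in> T" for \<kappa>
  proof -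
    have ext: "\<kappa> \<in> extensional {1..n}" using kT unfolding T_def by (auto simp: PiE_def)
    have eqset: "{\<sigma>\<in>S. hh \<sigma> = \<kappa>} = Wg {1..n} {1..n} (\<lambda>b a. i a = \<kappa> b)"
    proof -
      have hheq: "hh \<sigma> = \<kappa> \<longleftrightarrow> (\<forall>l\<in>{1..n}. i (\<sigma> l) = \<kappa> l)" for \<sigma>
      proof
        assume "hh \<sigma> = \<kappa>" then show "\<forall>l\<in>{1..n}. i (\<sigma> l) = \<kappa> l" unfolding hh_def by auto
      next
        assume a: "\<forall>l\<in>{1..n}. i (\<sigma> l) = \<kappa> l"
        show "hh \<sigma> = \<kappa>"
        proof
          fix l show "hh \<sigma> l = \<kappa> l"
            using a ext unfolding hh_def by (cases "l \<in> {1..n}") (auto simp: extensional_def)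
        qed
      qed
      show ?thesis
      proof (rule set_eqI)
        fix \<sigma>
        show "\<sigma> \<in> {\<sigma>\<in>S. hh \<sigma> = \<kappa>} \<longleftrightarrow> \<sigma> \<in> Wg {1..n} {1..n} (\<lambda>b a. i a = \<kappa> b)"
          unfolding S_def Wg_def mem_Collect_eq perm_iff hheq by blast
      qed
    qed
    have cnt: "card {\<sigma>\<in>S. hh \<sigma> = \<kappa>} = N"
      unfolding eqset N_def using count_lemma[of "{1..n}" \<kappa> i] kT unfolding T_def by simp
    have "sum Y {\<sigma>\<in>S. hh \<sigma> = \<kappa>} = sum (\<lambda>_. Z \<kappa>) {\<sigma>\<in>S. hh \<sigma> = \<kappa>}"
    proof (rule sum.cong)
      fix \<sigma> assume "\<sigma> \<in> {\<sigma>\<in>S. hh \<sigma> = \<kappa>}"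
      then have "\<forall>l\<in>{1..n}. i (\<sigma> l) = \<kappa> l" unfolding hh_def by auto
      then show "Y \<sigma> = Z \<kappa>" unfolding Y_def Z_def by (intro prod.cong) auto
    qed simp
    also have "\<dots> = of_nat N * Z \<kappa>" using cnt by simp
    finally show ?thesis .
  qed
  have "sum Y S = (\<Sum>\<kappa>\<in>T. sum Y {\<sigma>\<in>S. hh \<sigma> = \<kappa>})"
    using sum.group[OF fS fT img, of Y] by simp
  also have "\<dots> = (\<Sum>\<kappa>\<in>T. of_nat N * Z \<kappa>)" using inner by (rule sum.cong[OF refl])
  also have "\<dots> = of_nat N * sum Z T" by (simp add: sum_distrib_left)
  finally show ?thesis unfolding S_def Y_def N_def Z_def T_def by simp
qed

theorem lemma3p1:
  fixes G :: "(real ^ 'n) set"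
  assumes "full_rank_lattice G"
  shows
   "(\<forall>(f :: real ^ 'n \<Rightarrow> 'a::real_normed_field) (m::nat) (i :: nat \<Rightarrow> 'n) (n::nat) (g :: nat \<Rightarrow> real ^ 'n).
        continuous_on UNIV f \<and> G_periodic G f \<and> f \<noteq> (\<lambda>x. 0) \<and> m \<le> n
        \<and> (\<forall>l\<in>{1..n+1}. g l \<in> G) \<longrightarrow>
        Dcob (n+1) (\<lambda>x. f x * (\<Prod>l=1..m. of_real (x $ i l))) g = (\<lambda>x. 0))
    \<and>
    (\<forall>(n::nat) (i :: nat \<Rightarrow> 'n) (g :: nat \<Rightarrow> real ^ 'n).
        n \<ge> 1 \<and> (\<forall>l\<in>{1..n}. g l \<in> G) \<longrightarrow>
        Dcob n (\<lambda>x. (\<Prod>l=1..n. of_real (x $ i l) :: 'a)) g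
          = (\<lambda>x. \<Sum>\<sigma>\<in>{\<sigma>. \<sigma> permutes {1..n}}. \<Prod>l=1..n. of_real (g l $ i (\<sigma> l)))
        \<and> (\<Sum>\<sigma>\<in>{\<sigma>. \<sigma> permutes {1..n}}. \<Prod>l=1..n. of_real (g l $ i (\<sigma> l)) :: 'a)
          = of_nat (\<Prod>k\<in>UNIV. fact (card {l\<in>{1..n}. i l = k}))
            * (\<Sum>\<kappa>\<in>{\<kappa> \<in> {1..n} \<rightarrow>\<^sub>E (UNIV :: 'n set).
                     \<forall>k. card {l\<in>{1..n}. \<kappa> l = k} = card {l\<in>{1..n}. i l = k}}.
                 \<Prod>l=1..n. of_real (g l $ \<kappa> l)))"
proof (intro conjI allI impI)
  fix f :: "real ^ 'n \<Rightarrow> 'a" and m :: nat and i :: "nat \<Rightarrow> 'n" and n :: nat and g :: "nat \<Rightarrow> real ^ 'n"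
  assume H: "continuous_on UNIV f \<and> G_periodic G f \<and> f \<noteq> (\<lambda>x. 0) \<and> m \<le> n \<and> (\<forall>l\<in>{1..n+1}. g l \<in> G)"
  have 1: "Dcob (n+1) (\<lambda>x. f x * (\<Prod>l=1..m. of_real (x $ i l))) g
        = (\<lambda>x. f x * Dcob (n+1) (\<lambda>x. \<Prod>l=1..m. (of_real (x $ i l) :: 'a)) g x)"
    by (rule Dcob_periodic) (use H in auto)
  have "dle m (\<lambda>x. \<Prod>l=1..m. (of_real (x $ i l) :: 'a))" using dle_prod[of "{1..m}" i] by simp
  then have "n+1 > m \<longrightarrow> Dcob (n+1) (\<lambda>x. \<Prod>l=1..m. (of_real (x $ i l) :: 'a)) g = (\<lambda>x. 0)"
    using Dcob_dle by blast
  moreover have "n+1 > m" using H by simp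
  ultimately have "Dcob (n+1) (\<lambda>x. \<Prod>l=1..m. (of_real (x $ i l) :: 'a)) g = (\<lambda>x. 0)" by blast
  then show "Dcob (n+1) (\<lambda>x. f x * (\<Prod>l=1..m. of_real (x $ i l))) g = (\<lambda>x. 0)" unfolding 1 by simp
next
  fix n :: nat and i :: "nat \<Rightarrow> 'n" and g :: "nat \<Rightarrow> real ^ 'n"
  show "Dcob n (\<lambda>x. (\<Prod>l=1..n. of_real (x $ i l) :: 'a)) g
          = (\<lambda>x. \<Sum>\<sigma>\<in>{\<sigma>. \<sigma> permutes {1..n}}. \<Prod>l=1..n. of_real (g l $ i (\<sigma> l)))"
    using main_b1[of "{1..n}" n i g] unfolding Wg_perm by simp
  show "(\<Sum>\<sigma>\<in>{\<sigma>. \<sigma> permutes {1..n}}. \<Prod>l=1..n. of_real (g l $ i (\<sigma> l)) :: 'a)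
          = of_nat (\<Prod>k\<in>UNIV. fact (card {l\<in>{1..n}. i l = k}))
            * (\<Sum>\<kappa>\<in>{\<kappa> \<in> {1..n} \<rightarrow>\<^sub>E (UNIV :: 'n set).
                     \<forall>k. card {l\<in>{1..n}. \<kappa> l = k} = card {l\<in>{1..n}. i l = k}}.
                 \<Prod>l=1..n. of_real (g l $ \<kappa> l))"
    by (rule part_b2)
qed


end
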